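(* In a combinatorial auction where all bidders other than $i$ play piecewise constant strategies, every cell of bidder $i$'s action space is a convex polytope.
   Context: A combinatorial auction sells goods $M$ to bidders $N$; each bidder $i$ bids a vector $b_i\in\mathbb{R}_{\ge0}^r$ on his $r$ bundles of interest (other bundles bid $0$). An allocation gives each bidder one bundle of interest or $\emptyset$, pairwise disjoint; $X(b)$ is the set of allocations maximizing reported welfare $\sum_i b_i(x_i)$. Bidders' valuations are independent random variables $V_j$ and strategies $s_j$ map valuations to bids; piecewise constant means finitely many values, so $b_{-i}=s_{-i}(V_{-i})$ has finite support. A cell of bidder $i$'s action space $\mathbb{R}_{\ge0}^r$ is a maximal (with respect to inclusion) connected region $S$ such that for every $b_{-i}$ with positive probability there exists an allocation $x$ with $x\in X(b_i,b_{-i})$ for all $b_i\in S$. *)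

theory Defs
  imports "HOL-Analysis.Analysis" "HOL-Probability.Probability"
begin

text \<open>Every bidder j has r bnds
of interest, indexed by the finite type 'r: bnd j k is bidder j's k-th bnd of interest.
A bid profile assigns to every bidder a vector in real^'r (one entry per bnd of interest).
An allocation assigns to each bidder either one of his bnds of interest (Some k) or the
empty bnd (None); bidders outside N get None.\<close>

definition is_alloc :: "'b set \<Rightarrow> 'g set \<Rightarrow> ('b \<Rightarrow> 'r \<Rightarrow> 'g set) \<Rightarrow> ('b \<Rightarrow> 'r option) \<Rightarrow> bool" where
  "is_alloc N M bnd x \<longleftrightarrow>
     (\<forall>j. j \<notin> N \<longrightarrow> x j = None) \<and>
     (\<forall>j\<in>N. \<forall>k. x j = Some k \<longrightarrow> bnd j k \<subseteq> M) \<and>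
     (\<forall>j\<in>N. \<forall>j'\<in>N. \<forall>k k'. j \<noteq> j' \<longrightarrow> x j = Some k \<longrightarrow> x j' = Some k' \<longrightarrow>
        bnd j k \<inter> bnd j' k' = {})"

definition bid_value :: "real^'r::finite \<Rightarrow> 'r option \<Rightarrow> real" where
  "bid_value v o' = (case o' of None \<Rightarrow> 0 | Some k \<Rightarrow> v $ k)"

definition welfare :: "'b set \<Rightarrow> ('b \<Rightarrow> real^'r::finite) \<Rightarrow> ('b \<Rightarrow> 'r option) \<Rightarrow> real" where
  "welfare N b x = (\<Sum>j\<in>N. bid_value (b j) (x j))"

definition opt_allocs :: "'b set \<Rightarrow> 'g set \<Rightarrow> ('b \<Rightarrow> 'r \<Rightarrow> 'g set) \<Rightarrow> ('b \<Rightarrow> real^'r::finite)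
    \<Rightarrow> ('b \<Rightarrow> 'r option) set" where
  "opt_allocs N M bnd b = {x. is_alloc N M bnd x \<and>
      (\<forall>y. is_alloc N M bnd y \<longrightarrow> welfare N b y \<le> welfare N b x)}"

definition action_space :: "(real^'r::finite) set" where
  "action_space = {v. \<forall>k. 0 \<le> v $ k}"

text \<open>Opponent bid profiles b_{-i} with positive probability. A profile is represented as a
function c with c j = 0 for j outside N - {i}; bidder j plays s j (V j \<omega>).\<close>
definition pos_prob_profiles :: "'w measure \<Rightarrow> 'b set \<Rightarrow> 'b \<Rightarrow> ('b \<Rightarrow> 'w \<Rightarrow> 'v)
    \<Rightarrow> ('b \<Rightarrow> 'v \<Rightarrow> real^'r::finite) \<Rightarrow> ('b \<Rightarrow> real^'r) set" where
  "pos_prob_profiles P N i V s = {c. (\<forall>j. j \<notin> N - {i} \<longrightarrow> c j = 0) \<and>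
      measure P {\<omega>\<in>space P. \<forall>j\<in>N - {i}. s j (V j \<omega>) = c j} > 0}"

definition common_opt :: "'b set \<Rightarrow> 'g set \<Rightarrow> ('b \<Rightarrow> 'r \<Rightarrow> 'g set) \<Rightarrow> 'b
    \<Rightarrow> ('b \<Rightarrow> real^'r::finite) set \<Rightarrow> (real^'r) set \<Rightarrow> bool" where
  "common_opt N M bnd i D S \<longleftrightarrow>
     (\<forall>c\<in>D. \<exists>x. \<forall>bi\<in>S. x \<in> opt_allocs N M bnd (c(i := bi)))"

definition is_cell :: "'b set \<Rightarrow> 'g set \<Rightarrow> ('b \<Rightarrow> 'r \<Rightarrow> 'g set) \<Rightarrow> 'b
    \<Rightarrow> ('b \<Rightarrow> real^'r::finite) set \<Rightarrow> (real^'r) set \<Rightarrow> bool" where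
  "is_cell N M bnd i D S \<longleftrightarrow>
     S \<subseteq> action_space \<and> connected S \<and> common_opt N M bnd i D S \<and>
     (\<forall>T. S \<subseteq> T \<and> T \<subseteq> action_space \<and> connected T \<and> common_opt N M bnd i D T \<longrightarrow> T = S)"

end

theory Submission
  imports Defs
begin

definition evec :: "'r::finite option \<Rightarrow> real^'r" where
  "evec o' = (case o' of None \<Rightarrow> 0 | Some k \<Rightarrow> axis k 1)"

lemma bid_value_inner: "bid_value v o' = v \<bullet> evec o'"
  by (cases o') (simp_all add: bid_value_def evec_def inner_axis)

lemma welfare_split:
  assumes "finite N" "i \<in> N"
  shows "welfare N (c(i := bi)) y = bi \<bullet> evec (y i) + (\<Sum>j\<in>N-{i}. bid_value (c j) (y j))"
proof -
  have "welfare N (c(i := bi)) y = bid_value bi (y i) + (\<Sum>j\<in>N-{i}. bid_value ((c(i := bi)) j) (y j))"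
    unfolding welfare_def using assms by (simp add: sum.remove)
  also have "(\<Sum>j\<in>N-{i}. bid_value ((c(i := bi)) j) (y j)) = (\<Sum>j\<in>N-{i}. bid_value (c j) (y j))"
    by (rule sum.cong) auto
  finally show ?thesis by (simp only: bid_value_inner)
qed

lemma finite_funs:
  assumes "finite N" "\<forall>j\<in>N. finite (B j)"
  shows "finite {f. (\<forall>j. j \<notin> N \<longrightarrow> f j = d) \<and> (\<forall>j\<in>N. f j \<in> B j)}" (is "finite ?F")
proof -
  have inj: "inj_on (\<lambda>f. restrict f N) ?F"
  proof (rule inj_onI)
    fix f g assume f: "f \<in> ?F" and g: "g \<in> ?F" and e: "restrict f N = restrict g N"
    show "f = g"
    proof
      fix j show "f j = g j"
        using f g fun_cong[OF e, of j] by (cases "j \<in> N") auto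
    qed
  qed
  have "(\<lambda>f. restrict f N) ` ?F \<subseteq> PiE N B" by auto
  moreover have "finite (PiE N B)" using assms by (simp add: finite_PiE)
  ultimately have "finite ((\<lambda>f. restrict f N) ` ?F)" by (rule finite_subset)
  then show ?thesis using inj finite_imageD by blast
qed

lemma finite_allocs:
  assumes "finite N"
  shows "finite {x. is_alloc N M bnd (x :: 'b \<Rightarrow> 'r::finite option)}"
proof -
  have "{x. is_alloc N M bnd (x :: 'b \<Rightarrow> 'r option)} \<subseteq>
     {f. (\<forall>j. j \<notin> N \<longrightarrow> f j = None) \<and> (\<forall>j\<in>N. f j \<in> UNIV)}"
    by (auto simp: is_alloc_def)
  moreover have "finite {f. (\<forall>j. j \<notin> N \<longrightarrow> f j = (None :: 'r option)) \<and> (\<forall>j\<in>N. f j \<in> UNIV)}"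
    using assms by (intro finite_funs) auto
  ultimately show ?thesis by (rule finite_subset)
qed

lemma polyhedron_H:
  assumes "finite N" "i \<in> N"
  shows "polyhedron {bi. welfare N (c(i := bi)) y \<le> welfare N (c(i := bi)) x}"
proof -
  define K where "K = (\<Sum>j\<in>N-{i}. bid_value (c j) (x j)) - (\<Sum>j\<in>N-{i}. bid_value (c j) (y j))"
  have "{bi. welfare N (c(i := bi)) y \<le> welfare N (c(i := bi)) x} =
        {bi. (evec (y i) - evec (x i)) \<bullet> bi \<le> K}"
    using assms by (auto simp: welfare_split K_def inner_diff_left inner_diff_right inner_commute)
  then show ?thesis by (simp add: polyhedron_halfspace_le)
qed

lemma polyhedron_opt:
  assumes "finite N" "i \<in> N"
  shows "polyhedron {bi. x \<in> opt_allocs N M bnd (c(i := bi))}"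
proof (cases "is_alloc N M bnd x")
  case True
  let ?A = "{y. is_alloc N M bnd y}"
  have "{bi. x \<in> opt_allocs N M bnd (c(i := bi))} =
        \<Inter> ((\<lambda>y. {bi. welfare N (c(i := bi)) y \<le> welfare N (c(i := bi)) x}) ` ?A)"
    using True by (auto simp: opt_allocs_def)
  moreover have "polyhedron (\<Inter> ((\<lambda>y. {bi. welfare N (c(i := bi)) y \<le> welfare N (c(i := bi)) x}) ` ?A))"
    using finite_allocs[OF assms(1), of M bnd] polyhedron_H[OF assms] by (intro polyhedron_Inter) auto
  ultimately show ?thesis by simp
next
  case False
  then have "{bi. x \<in> opt_allocs N M bnd (c(i := bi))} = {}" by (auto simp: opt_allocs_def)
  then show ?thesis by simp
qed

lemma polyhedron_action_space: "polyhedron (action_space :: (real^'r::finite) set)"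
proof -
  have "action_space = \<Inter> ((\<lambda>k. {v::real^'r. (- axis k 1) \<bullet> v \<le> 0}) ` UNIV)"
    by (auto simp: action_space_def inner_axis')
  moreover have "polyhedron (\<Inter> ((\<lambda>k. {v::real^'r. (- axis k 1) \<bullet> v \<le> 0}) ` UNIV))"
    by (intro polyhedron_Inter) (auto simp del: inner_minus_left simp: polyhedron_halfspace_le)
  ultimately show ?thesis by simp
qed

theorem lemma2:
  fixes N :: "'b set" and M :: "'g set" and bnd :: "'b \<Rightarrow> 'r::finite \<Rightarrow> 'g set"
    and i :: 'b and P :: "'w measure" and Mv :: "'b \<Rightarrow> 'v measure"
    and V :: "'b \<Rightarrow> 'w \<Rightarrow> 'v" and s :: "'b \<Rightarrow> 'v \<Rightarrow> real^'r"
    and S :: "(real^'r) set"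
  assumes "finite N" and "finite M" and "i \<in> N"
    and "\<forall>j\<in>N. \<forall>k. bnd j k \<subseteq> M"
    and "prob_space P"
    and "prob_space.indep_vars P Mv V (N - {i})"
    and "\<forall>j\<in>N - {i}. finite (range (s j))"
    and "is_cell N M bnd i (pos_prob_profiles P N i V s) S"
  shows "convex S \<and> polyhedron S"
proof -
  let ?D = "pos_prob_profiles P N i V s"
  have Dsub: "?D \<subseteq> {f. (\<forall>j. j \<notin> N - {i} \<longrightarrow> f j = 0) \<and> (\<forall>j\<in>N - {i}. f j \<in> range (s j))}"
  proof
    fix c assume c: "c \<in> ?D"
    then have "measure P {\<omega>\<in>space P. \<forall>j\<in>N - {i}. s j (V j \<omega>) = c j} > 0"
      by (simp add: pos_prob_profiles_def)
    then have "{\<omega>\<in>space P. \<forall>j\<in>N - {i}. s j (V j \<omega>) = c j} \<noteq> {}" by (metis less_irrefl measure_empty)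
    then obtain \<omega> where "\<forall>j\<in>N - {i}. s j (V j \<omega>) = c j" by auto
    then show "c \<in> {f. (\<forall>j. j \<notin> N - {i} \<longrightarrow> f j = 0) \<and> (\<forall>j\<in>N - {i}. f j \<in> range (s j))}"
    proof (intro CollectI conjI ballI allI impI)
      fix j assume "j \<notin> N - {i}" then show "c j = 0" using c by (simp add: pos_prob_profiles_def)
    next
      fix j assume "j \<in> N - {i}" then show "c j \<in> range (s j)"
        using \<open>\<forall>j\<in>N - {i}. s j (V j \<omega>) = c j\<close> by (metis rangeI)
    qed
  qed
  have finD: "finite ?D"
    using finite_subset[OF Dsub finite_funs] assms(1,7) by auto
  have cell: "S \<subseteq> action_space" "common_opt N M bnd i ?D S"
    "\<And>T. S \<subseteq> T \<Longrightarrow> T \<subseteq> action_space \<Longrightarrow> connected T \<Longrightarrow> common_opt N M bnd i ?D T \<Longrightarrow> T = S"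
    using assms(8) unfolding is_cell_def by blast+
  obtain X where X: "\<forall>c\<in>?D. \<forall>bi\<in>S. X c \<in> opt_allocs N M bnd (c(i := bi))"
    using cell(2) unfolding common_opt_def by metis
  define T where "T = action_space \<inter> \<Inter> ((\<lambda>c. {bi. X c \<in> opt_allocs N M bnd (c(i := bi))}) ` ?D)"
  have polyT: "polyhedron T"
    unfolding T_def
    using finD polyhedron_opt[OF assms(1,3)] polyhedron_action_space
    by (intro polyhedron_Int polyhedron_Inter) auto
  have "T = S"
  proof (rule cell(3))
    show "S \<subseteq> T" using cell(1) X by (auto simp: T_def)
    show "T \<subseteq> action_space" by (auto simp: T_def)
    show "connected T" using polyT by (simp add: polyhedron_imp_convex convex_connected)
    show "common_opt N M bnd i ?D T" unfolding common_opt_def T_def by blast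
  qed
  then show ?thesis using polyT polyhedron_imp_convex by blast
qed

end
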